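(* Let $m,n\in\mathbb{N}$, let $\alpha\in\mathbb{Z}_n$ and let $f:\mathbb{Z}_n\to\mathbb{C}$ be given by $f(x)=\widehat f(\alpha)\chi_{\alpha}(x)$ (a $1$-sparse function). Let $\ell:=\min(n,m)$ and let $g:\mathbb{Z}_m\to\mathbb{C}$ be defined by $g(x)=f(x)$ for $0\le x<\ell$ and $g(x)=0$ otherwise. If $\beta\in\mathbb{Z}_m$ satisfies $\beta=\frac mn\alpha$, then $|\widehat g(\beta)|=\frac\ell m|\widehat f(\alpha)|$. For all $\beta\in\mathbb{Z}_m$ with $\beta\neq\frac mn\alpha$, \[|\widehat g(\beta)|\le|\widehat f(\alpha)|\min\Big(\frac\ell m,\ \frac{1}{2|\frac mn\alpha-\beta|_m}\Big).\] Moreover, if $\beta=\lfloor\frac mn\alpha\rceil$ (taken in $\mathbb{Z}_m$), then \[|\widehat g(\beta)|\ge|\widehat f(\alpha)|\max\Big(\frac{2\ell}{\pi m},\ \frac\ell m\sqrt{1-\frac{\pi^2\ell^2}{3m^2}\Big|\frac mn\alpha-\beta\Big|_m^2}\Big).\]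
   Context: $\mathbb{Z}_n=\{0,\dots,n-1\}$ with addition mod $n$; elements are treated as these integer representatives. $\chi_\alpha(x)=\exp(2\pi i\alpha x/n)$ on $\mathbb{Z}_n$; for $h:\mathbb{Z}_m\to\mathbb{C}$, $\widehat h(\beta)=\frac1m\sum_{x\in\mathbb{Z}_m}h(x)\exp(-2\pi i\beta x/m)$. $\lfloor x\rceil$ denotes the integer nearest to $x\in\mathbb{R}$. For $k\in\mathbb{N}$ and $x\in\mathbb{R}$, $|x|_k=\min\{|x-kz|:z\in\mathbb{Z}\}$. *)

theory Defs
  imports Complex_Main
begin

text \<open>Elements of Z_n are represented by naturals 0..n-1.\<close>

definition chi :: "nat \<Rightarrow> nat \<Rightarrow> nat \<Rightarrow> complex" where
  "chi n \<alpha> x = exp (2 * pi * \<i> * of_nat \<alpha> * of_nat x / of_nat n)"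

definition fourier :: "nat \<Rightarrow> (nat \<Rightarrow> complex) \<Rightarrow> nat \<Rightarrow> complex" where
  "fourier m h \<beta> = (1 / of_nat m) * (\<Sum>x<m. h x * exp (- 2 * pi * \<i> * of_nat \<beta> * of_nat x / of_nat m))"

definition mod_dist :: "nat \<Rightarrow> real \<Rightarrow> real" where
  "mod_dist k x = Inf {\<bar>x - real k * of_int z\<bar> | z. z \<in> (UNIV :: int set)}"

end

theory Submission
  imports Defs "HOL-Analysis.Complex_Transcendental"
begin


lemma sin_lower5: "y - y^3/6 - \<bar>y\<bar>^5/120 \<le> sin (y::real)"
proof -
  have "\<bar>sin y - (\<Sum>m<5. sin_coeff m * y ^ m)\<bar> \<le> inverse (fact 5) * \<bar>y\<bar> ^ 5"
    by (rule Maclaurin_sin_bound)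
  moreover have "(\<Sum>m<5. sin_coeff m * y ^ m) = y - y^3/6"
  proof -
    have "(\<Sum>m<5. sin_coeff m * y ^ m) = sin_coeff 0 + sin_coeff 1 * y + sin_coeff 2 * y^2 + sin_coeff 3 * y^3 + sin_coeff 4 * y^4"
      by (simp add: numeral_eq_Suc)
    moreover have "sin_coeff 0 = 0" "sin_coeff 1 = 1" "sin_coeff 2 = 0" "sin_coeff 3 = -1/6" "sin_coeff 4 = 0"
      by (simp_all add: sin_coeff_def fact_numeral)
    ultimately show ?thesis by simp
  qed
  moreover have "inverse (fact 5 :: real) = 1/120" by (simp add: fact_numeral)
  ultimately have "\<bar>sin y - (y - y^3/6)\<bar> \<le> \<bar>y\<bar>^5/120" by simp
  thus ?thesis using abs_le_D2 by (smt (verit))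
qed

lemma cos_lower: assumes "0 \<le> w" "w \<le> 2" shows "1 - w^2/2 \<le> cos (w::real)"
proof -
  have c: "cos w = 1 - 2 * (sin (w/2))^2" using cos_double_sin[of "w/2"] by simp
  have "sin (w/2) \<le> w/2" using sin_x_le_x[of "w/2"] assms by simp
  moreover have "0 \<le> sin (w/2)" using assms pi_gt3 by (intro sin_ge_zero) auto
  ultimately have "(sin (w/2))^2 \<le> (w/2)^2" by (simp add: power_mono)
  thus ?thesis using c by (simp add: power_divide)
qed

lemma jordan: assumes "0 \<le> y" "y \<le> pi/2" shows "2 * y / pi \<le> sin y"
proof (cases "y \<le> 1")
  case True
  have p: "2/pi \<le> 2/3" using pi_gt3 by (intro divide_left_mono) auto
  have "y^5 \<le> y^3" using True assms by (simp add: power_decreasing)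
  have "y^3 \<le> y" using True assms power_decreasing[of 1 3 y] by simp
  have "2*y/pi \<le> 2*y/3" using p assms by (simp add: mult.commute) (metis divide_inverse mult_left_mono p times_divide_eq_right) 
  also have "... \<le> y - y^3/6 - \<bar>y\<bar>^5/120" using \<open>y^5 \<le> y^3\<close> \<open>y^3 \<le> y\<close> assms by simp
  also have "... \<le> sin y" by (rule sin_lower5)
  finally show ?thesis .
next
  case False
  define w where "w = pi/2 - y"
  have w: "0 \<le> w" "w \<le> 1" using assms False pi_less_4 by (auto simp: w_def)
  have "sin y = cos w" by (simp add: w_def cos_diff)
  have "1 - w^2/2 \<le> cos w" using w by (intro cos_lower) auto
  have "w^2 \<le> w" using w mult_left_le[of w w] by (simp add: power2_eq_square)
  have "2*y/pi = 1 - 2*w/pi" using pi_gt_zero by (simp add: w_def field_simps)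
  also have "... \<le> 1 - w/2" using w pi_less_4 pi_gt_zero mult_right_mono[of pi 4 w] by (simp add: field_simps)
  also have "... \<le> 1 - w^2/2" using \<open>w^2 \<le> w\<close> by simp
  finally show ?thesis using \<open>sin y = cos w\<close> \<open>1 - w^2/2 \<le> cos w\<close> by simp
qed



lemma norm_one_minus_exp: "cmod (1 - exp (\<i> * complex_of_real \<psi>)) = 2 * \<bar>sin (\<psi>/2)\<bar>"
proof -
  have e: "exp (\<i> * complex_of_real \<psi>) = Complex (cos \<psi>) (sin \<psi>)"
    by (metis cis_conv_exp cis.code)
  have "(1 - cos \<psi>)^2 + (sin \<psi>)^2 = (2 * sin (\<psi>/2))^2"
  proof -
    have "cos \<psi> = 1 - 2 * (sin (\<psi>/2))^2" using cos_double_sin[of "\<psi>/2"] by simp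
    moreover have "(sin \<psi>)^2 = 1 - (cos \<psi>)^2" by (simp add: sin_squared_eq)
    ultimately show ?thesis by (simp add: power2_eq_square algebra_simps)
  qed
  hence "cmod (1 - exp (\<i> * complex_of_real \<psi>)) = sqrt ((2 * sin (\<psi>/2))^2)"
    by (simp add: e cmod_def one_complex.code)
  also have "... = \<bar>2 * sin (\<psi>/2)\<bar>" by (rule real_sqrt_abs)
  finally show ?thesis by (simp add: abs_mult)
qed

lemma geo: fixes \<phi> :: real
  shows "cmod (\<Sum>k<L. exp (\<i> * complex_of_real (real k * \<phi>))) * \<bar>sin (\<phi>/2)\<bar> = \<bar>sin (real L * \<phi>/2)\<bar>"
proof -
  define z where "z = exp (\<i> * complex_of_real \<phi>)"
  have t: "exp (\<i> * complex_of_real (real k * \<phi>)) = z ^ k" for k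
    unfolding z_def by (metis exp_of_nat_mult mult.left_commute of_real_mult of_real_of_nat_eq)
  have "1 - z^L = (1 - z) * (\<Sum>k<L. z^k)" by (rule one_diff_power_eq)
  hence "cmod (1 - z^L) = cmod (1 - z) * cmod (\<Sum>k<L. z^k)" by (simp add: norm_mult)
  moreover have "cmod (1 - z^L) = 2 * \<bar>sin (real L * \<phi>/2)\<bar>"
    using norm_one_minus_exp[of "real L * \<phi>"] t[of L] by simp
  moreover have "cmod (1 - z) = 2 * \<bar>sin (\<phi>/2)\<bar>" using norm_one_minus_exp[of \<phi>] z_def by simp
  moreover have "(\<Sum>k<L. exp (\<i> * complex_of_real (real k * \<phi>))) = (\<Sum>k<L. z^k)"
    by (rule sum.cong) (simp_all only: t)
  ultimately show ?thesis by simp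
qed

lemma abs_sin_shift: "\<bar>sin (y + real_of_int j * pi)\<bar> = \<bar>sin y\<bar>"
proof -
  have s: "sin (real_of_int j * pi) = 0" by (simp add: sin_zero_iff_int2)
  hence "\<bar>cos (real_of_int j * pi)\<bar> = 1" using sin_cos_squared_add[of "real_of_int j * pi"]
    by (simp add: abs_square_eq_1)
  thus ?thesis by (simp add: sin_add s abs_mult)
qed

lemma mod_dist_eq: assumes "0 < m" "\<bar>u\<bar> \<le> real m / 2"
  shows "mod_dist m (u + real m * of_int j) = \<bar>u\<bar>"
  unfolding mod_dist_def
proof (rule cInf_eq_minimum)
  show "\<bar>u\<bar> \<in> {\<bar>u + real m * of_int j - real m * of_int z\<bar> |z. z \<in> UNIV}"
    by (rule CollectI, rule exI[of _ j]) simp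
next
  fix x assume "x \<in> {\<bar>u + real m * of_int j - real m * of_int z\<bar> |z. z \<in> UNIV}"
  then obtain z where x: "x = \<bar>u + real m * of_int (j - z)\<bar>" by (auto simp: algebra_simps)
  show "\<bar>u\<bar> \<le> x"
  proof (cases "j - z = 0")
    case True thus ?thesis using x by simp
  next
    case False
    hence "1 \<le> \<bar>real_of_int (j - z)\<bar>" by linarith
    hence "real m \<le> \<bar>real m * of_int (j - z)\<bar>" using assms(1)
      by (simp add: abs_mult mult_le_cancel_left1)
    thus ?thesis using x assms(2) by linarith
  qed
qed



lemma fourier_g:
  fixes m n \<alpha> :: nat and f g :: "nat \<Rightarrow> complex"
  assumes "0 < m" and "0 < n"
    and f_sparse: "\<forall>x<n. f x = fourier n f \<alpha> * chi n \<alpha> x"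
    and g_def: "\<forall>x<m. g x = (if x < min n m then f x else 0)"
  shows "fourier m g \<beta> = fourier n f \<alpha> / of_nat m *
     (\<Sum>k<min n m. exp (\<i> * complex_of_real (real k * (2*pi*(real m / real n * real \<alpha> - real \<beta>) / real m))))"
proof -
  define E where "E x = exp (- 2 * pi * \<i> * of_nat \<beta> * of_nat x / of_nat m)" for x :: nat
  have "(\<Sum>x<m. g x * E x) = (\<Sum>x<m. if x \<in> {..<min n m} then f x * E x else 0)"
    using g_def by (intro sum.cong) auto
  also have "... = (\<Sum>x\<in>{..<m} \<inter> {..<min n m}. f x * E x)"
    by (rule sum.inter_restrict[symmetric]) simp
  also have "{..<m} \<inter> {..<min n m} = {..<min n m}" by auto
  also have "(\<Sum>x<min n m. f x * E x) = (\<Sum>x<min n m. fourier n f \<alpha> *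
       exp (\<i> * complex_of_real (real x * (2*pi*(real m / real n * real \<alpha> - real \<beta>) / real m))))"
  proof (rule sum.cong)
    fix x assume "x \<in> {..<min n m}"
    hence fx: "f x = fourier n f \<alpha> * chi n \<alpha> x" using f_sparse by auto
    have "chi n \<alpha> x * E x = exp (2 * pi * \<i> * of_nat \<alpha> * of_nat x / of_nat n + (- 2 * pi * \<i> * of_nat \<beta> * of_nat x / of_nat m))"
      by (simp only: chi_def E_def exp_add)
    also have "2 * pi * \<i> * of_nat \<alpha> * of_nat x / of_nat n + (- 2 * pi * \<i> * of_nat \<beta> * of_nat x / of_nat m)
       = \<i> * complex_of_real (real x * (2*pi*(real m / real n * real \<alpha> - real \<beta>) / real m))"
      using assms(1,2) by (simp add: field_simps)
    finally show "f x * E x = fourier n f \<alpha> *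
       exp (\<i> * complex_of_real (real x * (2*pi*(real m / real n * real \<alpha> - real \<beta>) / real m)))"
      by (simp add: fx)
  qed simp
  finally show ?thesis unfolding fourier_def E_def[symmetric]
    by (simp add: sum_distrib_left)
qed


lemma abs_sin_abs: "\<bar>sin (z::real)\<bar> = \<bar>sin \<bar>z\<bar>\<bar>"
  by (cases "z \<ge> 0") (simp_all add: abs_of_neg)

lemma poly_ineq: fixes y :: real assumes "0 \<le> y" "y \<le> 2"
  shows "0 \<le> 1 - y^2/6 - y^4/120 \<and> sqrt (1 - y^2/3) \<le> 1 - y^2/6 - y^4/120"
proof -
  define b where "b = y^2"
  have b: "0 \<le> b" "b \<le> 4" using assms by (auto simp: b_def power2_eq_square mult_mono[of y 2 y 2, simplified])
  have y4: "y^4 = b^2" by (simp add: b_def power_mult[symmetric])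
  define p where "p = b/6 + b^2/120"
  have "b * b \<le> 4 * 4" using b by (intro mult_mono) auto
  hence p0: "0 \<le> p" "p \<le> 1" using b by (auto simp: p_def power2_eq_square)
  have pb: "(b/6)^2 \<le> p^2" using b p0 by (auto simp: p_def intro!: power_mono)
  have e: "(1 - p)^2 = 1 - b/3 - b^2/60 + p^2" by (simp add: p_def power2_eq_square algebra_simps)
  have "(b/6)^2 = b^2/36" by (simp add: power_divide)
  moreover have "0 \<le> b^2" by simp
  ultimately have "1 - b/3 \<le> (1 - p)^2" using pb e by linarith
  hence "sqrt (1 - b/3) \<le> sqrt ((1-p)^2)" by (rule real_sqrt_le_mono)
  also have "... = 1 - p" using p0 by simp
  finally show ?thesis using p0 by (simp add: p_def y4 b_def[symmetric] diff_diff_eq)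
qed

theorem lemma3p1:
  fixes m n \<alpha> :: nat and f g :: "nat \<Rightarrow> complex"
  assumes "0 < m" and "0 < n" and "\<alpha> < n"
    and f_sparse: "\<forall>x<n. f x = fourier n f \<alpha> * chi n \<alpha> x"
    and g_def: "\<forall>x<m. g x = (if x < min n m then f x else 0)"
  shows
    "(\<forall>\<beta><m. real \<beta> = real m / real n * real \<alpha> \<longrightarrow>
        cmod (fourier m g \<beta>) = real (min n m) / real m * cmod (fourier n f \<alpha>))
   \<and> (\<forall>\<beta><m. real \<beta> \<noteq> real m / real n * real \<alpha> \<longrightarrow>
        cmod (fourier m g \<beta>) \<le> cmod (fourier n f \<alpha>) *
          min (real (min n m) / real m)
              (1 / (2 * mod_dist m (real m / real n * real \<alpha> - real \<beta>))))
   \<and> (let \<beta> = nat (round (real m / real n * real \<alpha>) mod int m) in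
        cmod (fourier m g \<beta>) \<ge> cmod (fourier n f \<alpha>) *
          max (2 * real (min n m) / (pi * real m))
              (real (min n m) / real m *
                sqrt (1 - pi\<^sup>2 * (real (min n m))\<^sup>2 / (3 * (real m)\<^sup>2) *
                       (mod_dist m (real m / real n * real \<alpha> - real \<beta>))\<^sup>2)))"
proof -
  define c where "c = fourier n f \<alpha>"
  define l where "l = min n m"
  define X where "X \<beta> = real m / real n * real \<alpha> - real \<beta>" for \<beta> :: nat
  define S where "S \<beta> = (\<Sum>k<l. exp (\<i> * complex_of_real (real k * (2*pi*X \<beta> / real m))))" for \<beta> :: nat
  have m0: "0 < real m" using assms by simp
  have lm: "real l \<le> real m" by (simp add: l_def)
  have normg: "cmod (fourier m g \<beta>) = cmod c / real m * cmod (S \<beta>)" for \<beta>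
    using fourier_g[OF assms(1,2) f_sparse g_def, of \<beta>]
    by (simp add: c_def S_def X_def l_def norm_mult norm_divide)
  have Sle: "cmod (S \<beta>) \<le> real l" for \<beta>
  proof -
    have "cmod (S \<beta>) \<le> (\<Sum>k<l. cmod (exp (\<i> * complex_of_real (real k * (2*pi*X \<beta> / real m)))))"
      unfolding S_def by (rule norm_sum)
    also have "... = real l" by (simp add: mult.commute[of \<i>])
    finally show ?thesis .
  qed
  have S0: "X \<beta> = 0 \<Longrightarrow> cmod (S \<beta>) = real l" for \<beta>
    by (simp add: S_def)
  have Xb: "\<beta> < m \<Longrightarrow> \<bar>X \<beta>\<bar> < real m" for \<beta>
  proof -
    assume "\<beta> < m"
    have "real m / real n * real \<alpha> < real m"
      using assms by (simp add: field_simps)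
    moreover have "0 \<le> real m / real n * real \<alpha>" by simp
    moreover have "real \<beta> < real m" using \<open>\<beta> < m\<close> by simp
    ultimately show ?thesis unfolding X_def by linarith
  qed
  have Ssin: "cmod (S \<beta>) * \<bar>sin (pi * u / real m)\<bar> = \<bar>sin (real l * pi * u / real m)\<bar>"
    if "X \<beta> = u + real m * of_int j" for \<beta> u j
  proof -
    have "cmod (S \<beta>) * \<bar>sin ((2*pi*X \<beta> / real m)/2)\<bar> = \<bar>sin (real l * (2*pi*X \<beta> / real m)/2)\<bar>"
      unfolding S_def by (rule geo)
    moreover have "(2*pi*X \<beta> / real m)/2 = pi * u / real m + real_of_int j * pi"
      using that m0 by (simp add: field_simps)
    moreover have "real l * (2*pi*X \<beta> / real m)/2 = real l * pi * u / real m + real_of_int (int l * j) * pi"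
      using that m0 by (simp add: field_simps)
    ultimately show ?thesis by (simp only: abs_sin_shift)
  qed
  have Xzero: "X \<beta> = 0" if "\<beta> < m" "X \<beta> = u + real m * of_int j" "u = 0" for \<beta> u j
  proof -
    have "\<bar>real m * of_int j\<bar> < real m" using Xb[OF that(1)] that by simp
    hence "\<bar>real_of_int j\<bar> < 1" using m0 by (simp add: abs_mult)
    hence "j = 0" by linarith
    thus ?thesis using that by simp
  qed
  have abssin: "\<bar>sin (pi * u / real m)\<bar> = sin (pi * (\<bar>u\<bar> / real m))" if "\<bar>u\<bar> \<le> real m" for u
  proof -
    have "0 \<le> sin (pi * (\<bar>u\<bar> / real m))" using that m0
      by (intro sin_ge_zero) (auto simp: field_simps)
    moreover have "\<bar>sin (pi * u / real m)\<bar> = \<bar>sin (pi * (\<bar>u\<bar> / real m))\<bar>"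
    proof -
      have "pi * (\<bar>u\<bar>/real m) = pi*u/real m \<or> pi * (\<bar>u\<bar>/real m) = -(pi*u/real m)"
        by (cases "u \<ge> 0") auto
      thus ?thesis by (metis abs_minus_cancel sin_minus)
    qed
    ultimately show ?thesis by simp
  qed
  show ?thesis
  proof (intro conjI allI impI)
    fix \<beta> assume "\<beta> < m" "real \<beta> = real m / real n * real \<alpha>"
    hence "X \<beta> = 0" by (simp add: X_def)
    thus "cmod (fourier m g \<beta>) = real (min n m) / real m * cmod (fourier n f \<alpha>)"
      using S0 normg by (simp add: c_def l_def)
  next
    fix \<beta> assume b: "\<beta> < m" "real \<beta> \<noteq> real m / real n * real \<alpha>"
    hence X0: "X \<beta> \<noteq> 0" by (simp add: X_def)
    define j where "j = round (X \<beta> / real m)"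
    define u where "u = X \<beta> - real m * of_int j"
    have "\<bar>of_int j - X \<beta> / real m\<bar> \<le> 1/2" unfolding j_def by (rule of_int_round_abs_le)
    hence "\<bar>real m * (of_int j - X \<beta> / real m)\<bar> \<le> real m * (1/2)" using m0
      by (simp add: abs_mult)
    hence ub: "\<bar>u\<bar> \<le> real m / 2" using m0 by (simp add: u_def right_diff_distrib abs_minus_commute)
    have Xu: "X \<beta> = u + real m * of_int j" by (simp add: u_def)
    have md: "mod_dist m (real m / real n * real \<alpha> - real \<beta>) = \<bar>u\<bar>"
      using mod_dist_eq[OF assms(1) ub, of j] Xu by (simp add: X_def)
    have u0: "u \<noteq> 0" using Xzero[OF b(1) Xu] X0 by blast
    define s where "s = \<bar>u\<bar> / real m"
    have s: "0 < s" "s \<le> 1/2" using u0 ub m0 by (auto simp: s_def field_simps)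
    have "2 * s \<le> sin (pi * s)" using jordan[of "pi * s"] s by simp
    moreover have "cmod (S \<beta>) * sin (pi * s) \<le> 1"
      using Ssin[OF Xu] abssin[of u] ub by (simp add: s_def)
    ultimately have "cmod (S \<beta>) * (2 * s) \<le> 1"
      by (meson mult_left_mono norm_ge_zero order_trans)
    hence "cmod (S \<beta>) \<le> real m / (2 * \<bar>u\<bar>)" using s u0 m0 by (simp add: s_def field_simps)
    hence "cmod c / real m * cmod (S \<beta>) \<le> cmod c / real m * (real m / (2 * \<bar>u\<bar>))"
      using m0 by (intro mult_left_mono) auto
    hence A: "cmod (fourier m g \<beta>) \<le> cmod c * (1 / (2 * \<bar>u\<bar>))" using normg m0 by simp
    have "cmod c / real m * cmod (S \<beta>) \<le> cmod c / real m * real l"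
      using m0 Sle by (intro mult_left_mono) auto
    hence B: "cmod (fourier m g \<beta>) \<le> cmod c * (real l / real m)" using normg by simp
    show "cmod (fourier m g \<beta>) \<le> cmod (fourier n f \<alpha>) * min (real (min n m) / real m)
           (1 / (2 * mod_dist m (real m / real n * real \<alpha> - real \<beta>)))"
    proof -
      have "cmod (fourier m g \<beta>) \<le> min (cmod c * (real l / real m)) (cmod c * (1 / (2 * \<bar>u\<bar>)))"
        using A B by simp
      also have "... = cmod c * min (real l / real m) (1 / (2 * \<bar>u\<bar>))"
        by (simp add: min_mult_distrib_left)
      finally show ?thesis unfolding md c_def l_def .
    qed
  next
    define r where "r = round (real m / real n * real \<alpha>)"
    define \<beta> where "\<beta> = nat (r mod int m)"
    have bm: "\<beta> < m" using assms(1) by (simp add: \<beta>_def nat_less_iff)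
    have "real \<beta> = real_of_int (r mod int m)" using assms(1) by (simp add: \<beta>_def)
    also have "r mod int m = r - int m * (r div int m)" by (simp add: minus_div_mult_eq_mod[symmetric])
    finally have rb: "real \<beta> = real_of_int r - real m * real_of_int (r div int m)" by simp
    define u where "u = real m / real n * real \<alpha> - real_of_int r"
    have u12: "\<bar>u\<bar> \<le> 1/2" using of_int_round_abs_le[of "real m / real n * real \<alpha>"]
      by (simp add: u_def r_def abs_minus_commute)
    have ub: "\<bar>u\<bar> \<le> real m / 2" using u12 assms(1) by simp
    have Xu: "X \<beta> = u + real m * of_int (r div int m)" by (simp add: X_def u_def rb)
    have md: "mod_dist m (real m / real n * real \<alpha> - real \<beta>) = \<bar>u\<bar>"
      using mod_dist_eq[OF assms(1) ub, of "r div int m"] Xu by (simp add: X_def)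
    have "cmod c * max (2 * real l / (pi * real m))
              (real l / real m * sqrt (1 - pi\<^sup>2 * (real l)\<^sup>2 / (3 * (real m)\<^sup>2) * \<bar>u\<bar>\<^sup>2))
          \<le> cmod (fourier m g \<beta>)"
    proof (cases "u = 0")
      case True
      hence "X \<beta> = 0" using Xzero[OF bm Xu] by simp
      hence g: "cmod (fourier m g \<beta>) = cmod c * (real l / real m)" using S0 normg by simp
      have "2 * real l / (pi * real m) \<le> real l / real m"
        using m0 pi_gt3 mult_right_mono[of 2 pi "real l"] by (simp add: field_simps)
      thus ?thesis using True g by (simp add: max_def)
    next
      case False
      define s where "s = \<bar>u\<bar> / real m"
      define y where "y = real l * pi * s"
      have s: "0 < s" using False m0 by (simp add: s_def)
      have "real l * \<bar>u\<bar> \<le> real m * (1/2)" using lm u12 by (intro mult_mono) auto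
      hence ls: "real l * s \<le> 1/2" using m0 by (simp add: s_def field_simps)
      have "pi * (real l * s) \<le> pi * (1/2)" using ls by (intro mult_left_mono) auto
      hence y: "0 \<le> y" "y \<le> pi/2" using s by (auto simp: y_def mult_ac)
      have sps: "s \<le> 1/2" using u12 m0 assms(1) by (simp add: s_def field_simps)
      have l0: "0 < real l" using assms(1,2) by (simp add: l_def)
      have spos: "0 < sin (pi * s)" using s sps by (intro sin_gt_zero) auto
      have sle: "sin (pi * s) \<le> pi * s" using s by (intro sin_x_le_x) auto
      have sy: "0 \<le> sin y" using y by (intro sin_ge_zero) auto
      have "\<bar>u\<bar> \<le> real m" using ub m0 by simp
      hence e1: "\<bar>sin (pi * u / real m)\<bar> = sin (pi * s)" using abssin[of u] by (simp add: s_def)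
      have "\<bar>sin (real l * pi * u / real m)\<bar> = \<bar>sin \<bar>real l * pi * u / real m\<bar>\<bar>"
        using abs_sin_abs[of "real l * pi * u / real m"] .
      also have "\<bar>real l * pi * u / real m\<bar> = y" using m0 by (simp add: y_def s_def abs_mult)
      finally have e2: "\<bar>sin (real l * pi * u / real m)\<bar> = sin y" using sy by simp
      have eq: "cmod (S \<beta>) * sin (pi * s) = sin y" using Ssin[OF Xu] e1 e2 by simp
      have Sge: "sin y / (pi * s) \<le> cmod (S \<beta>)"
      proof -
        have "cmod (S \<beta>) = sin y / sin (pi * s)" using eq spos by (simp add: field_simps)
        moreover have "sin y / (pi * s) \<le> sin y / sin (pi * s)"
          using sy spos sle by (intro divide_left_mono) auto
        ultimately show ?thesis by simp
      qed
      have A: "2 * real l / pi \<le> cmod (S \<beta>)"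
      proof -
        have "2 * y / pi / (pi * s) \<le> sin y / (pi * s)" using jordan[OF y] s
          by (intro divide_right_mono) auto
        moreover have "2 * y / pi / (pi * s) = 2 * real l / pi" using s by (simp add: y_def field_simps)
        ultimately show ?thesis using Sge by simp
      qed
      have y2: "y \<le> 2" using y pi_less_4 by simp
      have B: "real l * sqrt (1 - y^2/3) \<le> cmod (S \<beta>)"
      proof -
        have "y - y^3/6 - \<bar>y\<bar>^5/120 \<le> sin y" by (rule sin_lower5)
        moreover have "y * (1 - y^2/6 - y^4/120) = y - y^3/6 - \<bar>y\<bar>^5/120"
          using y by (simp add: algebra_simps eval_nat_numeral)
        ultimately have "y * (1 - y^2/6 - y^4/120) \<le> sin y" by simp
        hence "y * (1 - y^2/6 - y^4/120) / (pi * s) \<le> sin y / (pi * s)" using s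
          by (intro divide_right_mono) auto
        moreover have "y * (1 - y^2/6 - y^4/120) / (pi * s) = real l * (1 - y^2/6 - y^4/120)"
          using s by (simp add: y_def field_simps)
        moreover have "real l * sqrt (1 - y^2/3) \<le> real l * (1 - y^2/6 - y^4/120)"
          using poly_ineq[OF y(1) y2] l0 by (intro mult_left_mono) auto
        ultimately show ?thesis using Sge by linarith
      qed
      have yy: "pi\<^sup>2 * (real l)\<^sup>2 / (3 * (real m)\<^sup>2) * \<bar>u\<bar>\<^sup>2 = y^2/3"
        using m0 by (simp add: y_def s_def field_simps power2_eq_square)
      have cA: "cmod c * (2 * real l / (pi * real m)) \<le> cmod (fourier m g \<beta>)"
        using mult_left_mono[OF A, of "cmod c / real m"] m0 normg
        by (simp add: field_simps)
      have cB: "cmod c * (real l / real m * sqrt (1 - y^2/3)) \<le> cmod (fourier m g \<beta>)"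
        using mult_left_mono[OF B, of "cmod c / real m"] m0 normg
        by (simp add: field_simps)
      have yy': "sqrt (1 - pi\<^sup>2 * (real l)\<^sup>2 / (3 * (real m)\<^sup>2) * \<bar>u\<bar>\<^sup>2) = sqrt (1 - y^2/3)"
        using yy by simp
      show ?thesis unfolding yy' using cA cB by (metis max_def)
    qed
    thus "let \<beta> = nat (round (real m / real n * real \<alpha>) mod int m) in
        cmod (fourier m g \<beta>) \<ge> cmod (fourier n f \<alpha>) *
          max (2 * real (min n m) / (pi * real m))
              (real (min n m) / real m *
                sqrt (1 - pi\<^sup>2 * (real (min n m))\<^sup>2 / (3 * (real m)\<^sup>2) *
                       (mod_dist m (real m / real n * real \<alpha> - real \<beta>))\<^sup>2))"
      unfolding Let_def r_def[symmetric] \<beta>_def[symmetric] md c_def[symmetric] l_def[symmetric] .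
  qed
qed

end
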